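(* Let $\mathcal{G}$ be the affine plane of order $3$, let $\ell=\{a_1,a_2,a_3\}$, $m=\{b_1,b_2,b_3\}$, $n=\{c_1,c_2,c_3\}$ be its three pairwise parallel lines in one parallel class, let $R$ be a commutative ring with $2=0$, $A=M_R(\mathcal{G},1)$, and let $s$ be the sum of all $9$ points. Identify each line with the sum of its points in $A$. Then $\operatorname{ad}_\ell$ has eigenvalues $0$ and $1$, with eigenspaces \[ A^\ell_0=\langle a_1,a_2,a_3,s\rangle,\qquad A^\ell_1=\langle b_1+b_2,b_1+b_3,c_1+c_2,c_1+c_3\rangle, \] and generalized eigenspaces \[ \widetilde A^\ell_0=\langle a_1,a_2,a_3,m,n\rangle,\qquad \widetilde A^\ell_1=A^\ell_1 . \] In particular, $A=\widetilde A^\ell_0\oplus A^\ell_1$.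
   Context: The affine plane of order $3$ is the partial linear space of the $9$ points and $12$ lines of the affine plane over $\mathbb{F}_3$; any two distinct points $p,q$ are collinear (written $p\sim q$) and $p\wedge q$ is the third point of their line. The nilpotent Matsuo algebra $A=M_R(\mathcal{G},1)$ is the free $R$-module with basis the points and commutative bilinear product $p\cdot q=0$ if $p=q$, $p\cdot q=p+q+p\wedge q$ if $p\sim q$. $\operatorname{ad}_\ell(v)=\ell v$; eigenspace for $\lambda$: $\{v:\ell v=\lambda v\}$; generalized eigenspace: $\{v:(\operatorname{ad}_\ell-\lambda)^kv=0 \text{ for some } k\}$. Angle brackets denote $R$-linear span. *)

theory Defs
  imports Main "HOL-Library.Numeral_Type" "HOL-Library.Function_Algebras"
begin

text \<open>Points of the affine plane of order 3: the affine plane over F_3,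
  with F_3 realised as the residue ring type 3 of HOL-Library.Numeral_Type.\<close>
type_synonym pt = "3 \<times> 3"

text \<open>For distinct points p, q (all distinct points are collinear) the third point
  of their line is -(p+q).\<close>
definition wedge :: "pt \<Rightarrow> pt \<Rightarrow> pt" where
  "wedge p q = (- fst p - fst q, - snd p - snd q)"

definition aff_lines :: "pt set set" where
  "aff_lines = {{p, q, wedge p q} | p q. p \<noteq> q}"

text \<open>Elements of A = M_R(G,1): R-valued functions on the (finite) point set.\<close>
definition ind :: "pt set \<Rightarrow> pt \<Rightarrow> 'r::comm_ring_1" where
  "ind S = (\<lambda>x. if x \<in> S then 1 else 0)"

definition pnt :: "pt \<Rightarrow> pt \<Rightarrow> 'r::comm_ring_1" where
  "pnt p = ind {p}"

definition basis_prod :: "pt \<Rightarrow> pt \<Rightarrow> pt \<Rightarrow> 'r::comm_ring_1" where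
  "basis_prod p q = (if p = q then (\<lambda>_. 0) else ind {p, q, wedge p q})"

definition mmult :: "(pt \<Rightarrow> 'r::comm_ring_1) \<Rightarrow> (pt \<Rightarrow> 'r) \<Rightarrow> pt \<Rightarrow> 'r" where
  "mmult u w = (\<lambda>x. \<Sum>p\<in>UNIV. \<Sum>q\<in>UNIV. u p * w q * basis_prod p q x)"

definition scal :: "'r::comm_ring_1 \<Rightarrow> (pt \<Rightarrow> 'r) \<Rightarrow> pt \<Rightarrow> 'r" where
  "scal c v = (\<lambda>x. c * v x)"

definition rspan :: "(pt \<Rightarrow> 'r::comm_ring_1) set \<Rightarrow> (pt \<Rightarrow> 'r) set" where
  "rspan S = {v. \<exists>f. v = (\<Sum>u\<in>S. scal (f u) u)}"

definition eigsp :: "(pt \<Rightarrow> 'r::comm_ring_1) \<Rightarrow> 'r \<Rightarrow> (pt \<Rightarrow> 'r) set" where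
  "eigsp l c = {v. mmult l v = scal c v}"

definition geigsp :: "(pt \<Rightarrow> 'r::comm_ring_1) \<Rightarrow> 'r \<Rightarrow> (pt \<Rightarrow> 'r) set" where
  "geigsp l c = {v. \<exists>k. ((\<lambda>w. mmult l w - scal c w) ^^ k) v = 0}"

definition is_eigenvalue :: "(pt \<Rightarrow> 'r::comm_ring_1) \<Rightarrow> 'r \<Rightarrow> bool" where
  "is_eigenvalue l c \<longleftrightarrow> (\<exists>v. v \<noteq> 0 \<and> mmult l v = scal c v)"

end

theory Submission imports Defs begin

lemma three: "(3::3) = 0" by simp
lemma w3: fixes p q :: 3 assumes "-p - q = p" shows "q = p"
proof -
  have "q = -p - p" using assms by (metis add_diff_cancel_left' diff_add_cancel diff_diff_eq minus_diff_eq)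
  also have "... = -p-p + 3*p" by (metis three mult_zero_left add_0_right)
  also have "... = p" by (simp add: algebra_simps)
  finally show ?thesis .
qed

lemma wedge_comm: "wedge p q = wedge q p" by (simp add: wedge_def algebra_simps)
lemma neg_inv: "((x::3) = -a - q) = (a = -x - q)"
  by auto
lemma wedge_inv: "(x = wedge a q) = (a = wedge x q)"
  by (cases x; cases a; cases q) (simp add: wedge_def neg_inv)
lemma wedge_w1: "wedge p (wedge p q) = q" by (cases p; cases q) (simp add: wedge_def)
lemma wedge_w2: "wedge q (wedge p q) = p" by (cases p; cases q) (simp add: wedge_def)
lemma wedge_w3: "wedge (wedge p q) p = q" by (cases p; cases q) (simp add: wedge_def)
lemma wedge_w4: "wedge (wedge p q) q = p" by (cases p; cases q) (simp add: wedge_def)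
lemma wedge_ne1: assumes "p \<noteq> q" shows "wedge p q \<noteq> p"
proof
  assume "wedge p q = p"
  then have "- fst p - fst q = fst p" "- snd p - snd q = snd p" unfolding wedge_def
    by (metis fst_conv, metis snd_conv)
  then have "fst q = fst p" "snd q = snd p" using w3 by blast+
  then show False using assms by (simp add: prod_eq_iff)
qed
lemma wedge_ne2: "p \<noteq> q \<Longrightarrow> wedge p q \<noteq> q"
  using wedge_ne1[of q p] by (auto simp: wedge_comm)

lemma line_eq: assumes "L \<in> aff_lines" "x \<in> L" "y \<in> L" "x \<noteq> y"
  shows "L = {x, y, wedge x y}"
proof -
  obtain p q where L: "L = {p, q, wedge p q}" "p \<noteq> q" using assms(1) by (auto simp: aff_lines_def)
  show ?thesis using assms(2-4) L wedge_ne1[OF L(2)] wedge_ne2[OF L(2)]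
    by (auto simp: wedge_comm wedge_w1 wedge_w2 wedge_w3 wedge_w4)
qed

lemma line_card: assumes "L \<in> aff_lines" shows "card L = 3"
proof -
  obtain p q where L: "L = {p, q, wedge p q}" "p \<noteq> q" using assms(1) by (auto simp: aff_lines_def)
  then show ?thesis using wedge_ne1[OF L(2)] wedge_ne2[OF L(2)] by auto
qed

lemma cross: assumes "A \<in> aff_lines" "B \<in> aff_lines" "A \<inter> B = {}" "A \<union> B \<union> C = UNIV"
  "x \<in> A" "y \<in> B" shows "wedge x y \<in> C"
proof -
  have xy: "x \<noteq> y" using assms by auto
  have "wedge x y \<notin> A"
  proof
    assume h: "wedge x y \<in> A"
    have "A = {x, wedge x y, wedge x (wedge x y)}"
      using line_eq[OF assms(1) assms(5) h] wedge_ne1[OF xy] by metis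
    then show False using assms(3,6) by (auto simp: wedge_w1)
  qed
  moreover have "wedge x y \<notin> B"
  proof
    assume h: "wedge x y \<in> B"
    have "B = {y, wedge x y, wedge y (wedge x y)}"
      using line_eq[OF assms(2) assms(6) h] wedge_ne2[OF xy] by metis
    then show False using assms(3,5) by (auto simp: wedge_w2)
  qed
  ultimately show ?thesis using assms(4) by auto
qed

lemma bp_eq: "basis_prod p q x = (if p = q then 0 else if x \<in> {p, q, wedge p q} then 1 else 0)"
  by (simp add: basis_prod_def ind_def)

lemma bp_l: assumes "l \<in> aff_lines" "q \<in> l" "(2::'r::comm_ring_1) = 0"
  shows "(\<Sum>p\<in>l. basis_prod p q x :: 'r) = 0"
proof -
  have fin: "finite l" using line_card[OF assms(1)] card.infinite by fastforce
  have h: "basis_prod p q x = (if p = q then 0 else (ind l x :: 'r))" if "p \<in> l" for p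
    using line_eq[OF assms(1) that assms(2)] by (auto simp: bp_eq ind_def)
  have "(\<Sum>p\<in>l. basis_prod p q x :: 'r) = (\<Sum>p\<in>l. (if p = q then 0 else (ind l x :: 'r)))"
    using h by (rule sum.cong[OF refl])
  also have "... = (\<Sum>p\<in>l - {q}. ind l x)"
    using fin by (simp add: sum.If_cases Diff_eq Int_commute)
  also have "... = of_nat 2 * ind l x" using line_card[OF assms(1)] fin assms(2) by simp
  also have "... = 0" using assms(3) by simp
  finally show ?thesis .
qed

lemma bp_B: assumes "l \<in> aff_lines" "B \<in> aff_lines" "C \<in> aff_lines"
  "l \<inter> B = {}" "l \<inter> C = {}" "B \<inter> C = {}" "l \<union> B \<union> C = UNIV"
  "q \<in> B" "(2::'r::comm_ring_1) = 0"
  shows "(\<Sum>p\<in>l. basis_prod p q x :: 'r) = (if x \<in> B \<and> x \<noteq> q then 0 else 1)"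
proof -
  have fin: "finite l" using line_card[OF assms(1)] card.infinite by fastforce
  have wC: "wedge p q \<in> C" if "p \<in> l" for p
    using cross[OF assms(1,2,4,7) that assms(8)] .
  have h: "basis_prod p q x = (if p = x \<or> x = q \<or> p = wedge x q then 1 else (0::'r))" if "p \<in> l" for p
    using that assms(4,8) by (auto simp: bp_eq wedge_inv wedge_w4)
  have S: "(\<Sum>p\<in>l. basis_prod p q x :: 'r) = (\<Sum>p\<in>l. if p = x \<or> x = q \<or> p = wedge x q then 1 else (0::'r))"
    using h by (rule sum.cong[OF refl])
  show ?thesis
  proof (cases "x = q")
    case True
    then have "(\<Sum>p\<in>l. basis_prod p q x :: 'r) = of_nat 3" using S line_card[OF assms(1)] by simp
    also have "(of_nat 3 :: 'r) = 2 + 1" by simp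
    finally show ?thesis using True assms(9) by simp
  next
    case False
    show ?thesis
    proof (cases "x \<in> B")
      case True
      have "x \<notin> l" using True assms(4) by auto
      moreover have "wedge x q \<notin> l"
      proof
        assume "wedge x q \<in> l"
        then have "wedge (wedge x q) q \<in> C" using wC by blast
        then show False using True assms(6) by (simp add: wedge_w4) blast
      qed
      ultimately have "(\<Sum>p\<in>l. basis_prod p q x :: 'r) = 0" using S False
        by (auto intro!: sum.neutral)
      then show ?thesis using True False by simp
    next
      case nB: False
      show ?thesis
      proof (cases "x \<in> l")
        case True
        have "wedge x q \<notin> l"
        proof
          assume "wedge x q \<in> l"
          then have "wedge (wedge x q) q \<in> C" using wC by blast
          then show False using True assms(5) by (simp add: wedge_w4) blast
        qed
        then have "(\<Sum>p\<in>l. basis_prod p q x :: 'r) = (\<Sum>p\<in>l. if p = x then 1 else 0)"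
          unfolding S using False \<open>wedge x q \<notin> l\<close> by (intro sum.cong refl) auto
        then show ?thesis using True nB fin by simp
      next
        case False2: False
        have xC: "x \<in> C" using nB False2 assms(7) by auto
        have wl: "wedge x q \<in> l"
          using cross[OF assms(3,2) _ _ xC assms(8), of l] assms(6,7) by (auto simp: Int_commute Un_ac)
        have "x \<noteq> p" if "p \<in> l" for p using that xC assms(5) by auto
        then have "(\<Sum>p\<in>l. basis_prod p q x :: 'r) = (\<Sum>p\<in>l. if p = wedge x q then 1 else 0)"
          unfolding S using False by (intro sum.cong refl) auto
        then show ?thesis using wl nB fin by simp
      qed
    qed
  qed
qed

lemma sum_B: fixes v :: "'a \<Rightarrow> 'r::comm_ring_1" assumes "finite B" shows "(\<Sum>q\<in>B. v q * (if x \<in> B \<and> x \<noteq> q then 0 else 1)) =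
   (if x \<in> B then v x else sum v B)"
proof (cases "x \<in> B")
  case True
  have "(\<Sum>q\<in>B. v q * (if x \<in> B \<and> x \<noteq> q then 0 else 1)) = (\<Sum>q\<in>B. if x = q then v q else 0)"
    using True by (intro sum.cong refl) auto
  then show ?thesis using True assms by simp
qed simp

lemma mult_formula:
  assumes "l \<in> aff_lines" "m \<in> aff_lines" "n \<in> aff_lines"
    "l \<inter> m = {}" "l \<inter> n = {}" "m \<inter> n = {}" "l \<union> m \<union> n = UNIV"
    "(2::'r::comm_ring_1) = 0"
  shows "mmult (ind l) v x = (if x \<in> m then v x else sum v m) + (if x \<in> n then (v x :: 'r) else sum v n)"
proof -
  have fin: "finite l" "finite m" "finite n" by simp_all
  have "mmult (ind l) v x = (\<Sum>q\<in>UNIV. \<Sum>p\<in>UNIV. ind l p * v q * basis_prod p q x)"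
    unfolding mmult_def by (rule sum.swap)
  also have "... = (\<Sum>q\<in>UNIV. v q * (\<Sum>p\<in>l. basis_prod p q x))"
  proof (rule sum.cong[OF refl])
    fix q
    have "(\<Sum>p\<in>UNIV. ind l p * v q * basis_prod p q x) = (\<Sum>p\<in>UNIV. if p \<in> l then v q * basis_prod p q x else 0)"
      by (intro sum.cong refl) (simp add: ind_def)
    also have "... = (\<Sum>p\<in>UNIV \<inter> l. v q * basis_prod p q x)"
      by (rule sum.inter_restrict[symmetric]) simp
    finally show "(\<Sum>p\<in>UNIV. ind l p * v q * basis_prod p q x) = v q * (\<Sum>p\<in>l. basis_prod p q x)"
      by (simp add: sum_distrib_left)
  qed
  also have "... = (\<Sum>q\<in>l. v q * (\<Sum>p\<in>l. basis_prod p q x)) + (\<Sum>q\<in>m. v q * (\<Sum>p\<in>l. basis_prod p q x))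
      + (\<Sum>q\<in>n. v q * (\<Sum>p\<in>l. basis_prod p q x))"
    unfolding assms(7)[symmetric] using assms(4-6)
    by (simp add: sum.union_disjoint Int_Un_distrib2)
  also have "(\<Sum>q\<in>l. v q * (\<Sum>p\<in>l. basis_prod p q x)) = 0"
    using bp_l[OF assms(1) _ assms(8)] by simp
  also have "(\<Sum>q\<in>m. v q * (\<Sum>p\<in>l. basis_prod p q x)) = (\<Sum>q\<in>m. v q * (if x \<in> m \<and> x \<noteq> q then 0 else 1))"
    using bp_B[OF assms(1-7) _ assms(8)] by simp
  also have "(\<Sum>q\<in>n. v q * (\<Sum>p\<in>l. basis_prod p q x)) = (\<Sum>q\<in>n. v q * (if x \<in> n \<and> x \<noteq> q then 0 else 1))"
  proof -
    have "n \<inter> m = {}" "l \<union> n \<union> m = UNIV" using assms(6,7) by auto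
    then show ?thesis using bp_B[OF assms(1,3,2,5,4) \<open>n \<inter> m = {}\<close> \<open>l \<union> n \<union> m = UNIV\<close> _ assms(8)] by simp
  qed
  finally show ?thesis unfolding sum_B[OF fin(2)] sum_B[OF fin(3)] by simp
qed

lemma ne_at: "f x \<noteq> g x \<Longrightarrow> f \<noteq> g" by auto

lemma rspan4: assumes "distinct [u1, u2, u3, u4]"
  shows "rspan {u1, u2, u3, u4} = {v. \<exists>f1 f2 f3 f4. v = scal f1 u1 + scal f2 u2 + scal f3 u3 + scal f4 u4}"
proof (intro set_eqI iffI)
  fix v assume "v \<in> rspan {u1, u2, u3, u4}"
  then obtain f where "v = (\<Sum>u\<in>{u1, u2, u3, u4}. scal (f u) u)" by (auto simp: rspan_def)
  then have "v = scal (f u1) u1 + scal (f u2) u2 + scal (f u3) u3 + scal (f u4) u4"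
    using assms by (simp add: add.assoc)
  then show "v \<in> {v. \<exists>f1 f2 f3 f4. v = scal f1 u1 + scal f2 u2 + scal f3 u3 + scal f4 u4}" by blast
next
  fix v assume "v \<in> {v. \<exists>f1 f2 f3 f4. v = scal f1 u1 + scal f2 u2 + scal f3 u3 + scal f4 u4}"
  then obtain f1 f2 f3 f4 where v: "v = scal f1 u1 + scal f2 u2 + scal f3 u3 + scal f4 u4" by blast
  define f where "f = (\<lambda>u. if u = u1 then f1 else if u = u2 then f2 else if u = u3 then f3 else f4)"
  have fv: "f u1 = f1" "f u2 = f2" "f u3 = f3" "f u4 = f4" using assms by (auto simp: f_def)
  have "(\<Sum>u\<in>{u1, u2, u3, u4}. scal (f u) u) = scal (f u1) u1 + scal (f u2) u2 + scal (f u3) u3 + scal (f u4) u4"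
    using assms by (simp add: add.assoc)
  then have "v = (\<Sum>u\<in>{u1, u2, u3, u4}. scal (f u) u)" unfolding fv v by simp
  then show "v \<in> rspan {u1, u2, u3, u4}" by (auto simp: rspan_def)
qed

lemma rspan5: assumes "distinct [u1, u2, u3, u4, u5]"
  shows "rspan {u1, u2, u3, u4, u5} = {v. \<exists>f1 f2 f3 f4 f5. v = scal f1 u1 + scal f2 u2 + scal f3 u3 + scal f4 u4 + scal f5 u5}"
proof (intro set_eqI iffI)
  fix v assume "v \<in> rspan {u1, u2, u3, u4, u5}"
  then obtain f where "v = (\<Sum>u\<in>{u1, u2, u3, u4, u5}. scal (f u) u)" by (auto simp: rspan_def)
  then have "v = scal (f u1) u1 + scal (f u2) u2 + scal (f u3) u3 + scal (f u4) u4 + scal (f u5) u5"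
    using assms by (simp add: add.assoc)
  then show "v \<in> {v. \<exists>f1 f2 f3 f4 f5. v = scal f1 u1 + scal f2 u2 + scal f3 u3 + scal f4 u4 + scal f5 u5}" by blast
next
  fix v assume "v \<in> {v. \<exists>f1 f2 f3 f4 f5. v = scal f1 u1 + scal f2 u2 + scal f3 u3 + scal f4 u4 + scal f5 u5}"
  then obtain f1 f2 f3 f4 f5 where v: "v = scal f1 u1 + scal f2 u2 + scal f3 u3 + scal f4 u4 + scal f5 u5" by blast
  define f where "f = (\<lambda>u. if u = u1 then f1 else if u = u2 then f2 else if u = u3 then f3 else if u = u4 then f4 else f5)"
  have fv: "f u1 = f1" "f u2 = f2" "f u3 = f3" "f u4 = f4" "f u5 = f5" using assms by (auto simp: f_def)
  have "(\<Sum>u\<in>{u1, u2, u3, u4, u5}. scal (f u) u) = scal (f u1) u1 + scal (f u2) u2 + scal (f u3) u3 + scal (f u4) u4 + scal (f u5) u5"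
    using assms by (simp add: add.assoc)
  then have "v = (\<Sum>u\<in>{u1, u2, u3, u4, u5}. scal (f u) u)" unfolding fv v by simp
  then show "v \<in> rspan {u1, u2, u3, u4, u5}" by (auto simp: rspan_def)
qed

lemma c2a: "(2::'r::comm_ring_1) = 0 \<Longrightarrow> (x::'r) + x = 0"
  by (metis mult_2 mult_zero_left)
lemma c2b: "(2::'r::comm_ring_1) = 0 \<Longrightarrow> (x::'r) + (x + y) = y"
  by (metis add.assoc add_0 c2a)
lemma c2neg: "(2::'r::comm_ring_1) = 0 \<Longrightarrow> - (x::'r) = x"
  by (metis add_eq_0_iff c2a)
lemma c2three: "(2::'r::comm_ring_1) = 0 \<Longrightarrow> (x::'r) + x + x = x"
  by (metis add_0 c2a)
lemma c2eq: "(2::'r::comm_ring_1) = 0 \<Longrightarrow> ((x::'r) + y = 0) = (x = y)"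
  by (metis add_eq_0_iff c2neg)

theorem proposition5p16:
  fixes l m n :: "pt set" and a1 a2 a3 b1 b2 b3 c1 c2 c3 :: pt
  assumes "l \<in> aff_lines" and "m \<in> aff_lines" and "n \<in> aff_lines"
    and "l \<inter> m = {}" and "l \<inter> n = {}" and "m \<inter> n = {}"
    and "l = {a1, a2, a3}" and "distinct [a1, a2, a3]"
    and "m = {b1, b2, b3}" and "distinct [b1, b2, b3]"
    and "n = {c1, c2, c3}" and "distinct [c1, c2, c3]"
    and two: "(2::'r::comm_ring_1) = 0"
  defines "s \<equiv> (ind UNIV :: pt \<Rightarrow> 'r)" and "L \<equiv> (ind l :: pt \<Rightarrow> 'r)"
  shows "is_eigenvalue L 0
    \<and> is_eigenvalue L 1
    \<and> eigsp L 0 = rspan {pnt a1, pnt a2, pnt a3, s}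
    \<and> eigsp L 1 = rspan {pnt b1 + pnt b2, pnt b1 + pnt b3,
                                 pnt c1 + pnt c2, pnt c1 + pnt c3}
    \<and> geigsp L 0 = rspan {pnt a1, pnt a2, pnt a3, ind m, ind n}
    \<and> geigsp L 1 = eigsp L 1
    \<and> (\<forall>v::pt \<Rightarrow> 'r. \<exists>x y. x \<in> geigsp L 0 \<and> y \<in> eigsp L 1 \<and> v = x + y)
    \<and> geigsp L 0 \<inter> eigsp L 1 = {0}"
proof -
  note ldef = assms(7) and mdef = assms(9) and ndef = assms(11)
  have D: "distinct [a1, a2, a3, b1, b2, b3, c1, c2, c3]"
    using assms(4-12) by auto
  have neq: "a1 \<noteq> a2" "a1 \<noteq> a3" "a1 \<noteq> b1" "a1 \<noteq> b2" "a1 \<noteq> b3" "a1 \<noteq> c1" "a1 \<noteq> c2" "a1 \<noteq> c3" "a2 \<noteq> a1" "a2 \<noteq> a3" "a2 \<noteq> b1" "a2 \<noteq> b2" "a2 \<noteq> b3" "a2 \<noteq> c1" "a2 \<noteq> c2" "a2 \<noteq> c3" "a3 \<noteq> a1" "a3 \<noteq> a2" "a3 \<noteq> b1" "a3 \<noteq> b2" "a3 \<noteq> b3" "a3 \<noteq> c1" "a3 \<noteq> c2" "a3 \<noteq> c3" "b1 \<noteq> a1" "b1 \<noteq> a2" "b1 \<noteq> a3" "b1 \<noteq> b2" "b1 \<noteq> b3" "b1 \<noteq> c1" "b1 \<noteq> c2" "b1 \<noteq> c3" "b2 \<noteq> a1" "b2 \<noteq> a2" "b2 \<noteq> a3" "b2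 \<noteq> b1" "b2 \<noteq> b3" "b2 \<noteq> c1" "b2 \<noteq> c2" "b2 \<noteq> c3" "b3 \<noteq> a1" "b3 \<noteq> a2" "b3 \<noteq> a3" "b3 \<noteq> b1" "b3 \<noteq> b2" "b3 \<noteq> c1" "b3 \<noteq> c2" "b3 \<noteq> c3" "c1 \<noteq> a1" "c1 \<noteq> a2" "c1 \<noteq> a3" "c1 \<noteq> b1" "c1 \<noteq> b2" "c1 \<noteq> b3" "c1 \<noteq> c2" "c1 \<noteq> c3" "c2 \<noteq> a1" "c2 \<noteq> a2" "c2 \<noteq> a3" "c2 \<noteq> b1" "c2 \<noteq> b2" "c2 \<noteq> b3" "c2 \<noteq> c1" "c2 \<noteq> c3" "c3 \<noteq> a1" "c3 \<noteq> a2" "c3 \<noteq> a3" "c3 \<noteq> b1" "c3 \<noteq> b2" "c3 \<noteq> b3" "c3 \<noteq> c1" "c3 \<noteq> c2" using D by auto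
  have cl: "card l = 3" "card m = 3" "card n = 3" using line_card assms(1-3) by auto
  have cover: "l \<union> m \<union> n = UNIV"
  proof (rule card_subset_eq)
    show "finite (UNIV :: pt set)" by simp
    have "card (l \<union> m \<union> n) = 9" using cl assms(4-6) by (simp add: card_Un_disjoint Int_Un_distrib2)
    then show "card (l \<union> m \<union> n) = card (UNIV :: pt set)" by simp
  qed simp
  have U9: "(UNIV :: pt set) = {a1, a2, a3, b1, b2, b3, c1, c2, c3}"
    using cover ldef mdef ndef by auto
  have fe: "(f = g) \<longleftrightarrow> (f a1 = g a1 \<and> f a2 = g a2 \<and> f a3 = g a3 \<and> f b1 = g b1 \<and> f b2 = g b2 \<and> f b3 = g b3
     \<and> f c1 = g c1 \<and> f c2 = g c2 \<and> f c3 = g c3)" for f g :: "pt \<Rightarrow> 'r"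
  proof
    assume h: "f a1 = g a1 \<and> f a2 = g a2 \<and> f a3 = g a3 \<and> f b1 = g b1 \<and> f b2 = g b2 \<and> f b3 = g b3
     \<and> f c1 = g c1 \<and> f c2 = g c2 \<and> f c3 = g c3"
    show "f = g"
    proof
      fix x
      have "x \<in> {a1, a2, a3, b1, b2, b3, c1, c2, c3}" using U9 by blast
      then show "f x = g x" using h by auto
    qed
  qed simp
  have F: "mmult L v x = (if x \<in> m then v x else v b1 + v b2 + v b3) + (if x \<in> n then v x else v c1 + v c2 + v c3)"
    for v x
  proof -
    have "sum v m = v b1 + v b2 + v b3" "sum v n = v c1 + v c2 + v c3"
      using mdef ndef assms(10,12) by (simp_all add: add.assoc)
    then show ?thesis using mult_formula[OF assms(1-6) cover two, of v x] unfolding L_def by simp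
  qed
  note C2 = c2a[OF two] c2b[OF two] c2neg[OF two] c2eq[OF two] c2three[OF two]
  note ev = pnt_def ind_def scal_def s_def

  have dl4: "distinct [pnt a1, pnt a2, pnt a3, s]" by (simp add: fe ev neq)
  have eig0: "eigsp L 0 = rspan {pnt a1, pnt a2, pnt a3, s}"
    unfolding rspan4[OF dl4]
  proof (intro set_eqI iffI)
    fix v :: "pt \<Rightarrow> 'r" assume "v \<in> eigsp L 0"
    then have h0: "mmult L v = scal 0 v" by (simp add: eigsp_def)
    have h: "mmult L v x = 0" for x using fun_cong[OF h0, of x] by (simp add: scal_def)
    have q: "v b1 = v c1 + v c2 + v c3" "v b2 = v c1 + v c2 + v c3" "v b3 = v c1 + v c2 + v c3"
      "v b1 + v b2 + v b3 = v c1" "v b1 + v b2 + v b3 = v c2" "v b1 + v b2 + v b3 = v c3"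
      "v b1 + v b2 + v b3 = v c1 + v c2 + v c3"
      using h[of b1] apply (simp add: F mdef ndef neq C2)
      using h[of b2] apply (simp add: F mdef ndef neq C2)
      using h[of b3] apply (simp add: F mdef ndef neq C2)
      using h[of c1] apply (simp add: F mdef ndef neq C2)
      using h[of c2] apply (simp add: F mdef ndef neq C2)
      using h[of c3] apply (simp add: F mdef ndef neq C2)
      using h[of a1] apply (simp add: F mdef ndef neq C2)
      done
    obtain t where t: "t = v c1 + v c2 + v c3" by simp
    have e: "v b1 = t" "v b2 = t" "v b3 = t" "v c1 = t" "v c2 = t" "v c3 = t"
      using q t by metis+
    show "v \<in> {v. \<exists>f1 f2 f3 f4. v = scal f1 (pnt a1) + scal f2 (pnt a2) + scal f3 (pnt a3) + scal f4 s}"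
      apply (rule CollectI)
      apply (rule exI[of _ "v a1 - t"])
      apply (rule exI[of _ "v a2 - t"])
      apply (rule exI[of _ "v a3 - t"])
      apply (rule exI[of _ "t"])
      using e by (simp add: fe ev neq)
  next
    fix v :: "pt \<Rightarrow> 'r" assume "v \<in> {v. \<exists>f1 f2 f3 f4. v = scal f1 (pnt a1) + scal f2 (pnt a2) + scal f3 (pnt a3) + scal f4 s}"
    then obtain f1 f2 f3 f4 where v: "v = scal f1 (pnt a1) + scal f2 (pnt a2) + scal f3 (pnt a3) + scal f4 s" by blast
    have vv: "v a1 = f1 + f4" "v a2 = f2 + f4" "v a3 = f3 + f4" "v b1 = f4" "v b2 = f4" "v b3 = f4"
       "v c1 = f4" "v c2 = f4" "v c3 = f4" by (simp_all add: v ev neq)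
    show "v \<in> eigsp L 0" unfolding eigsp_def
      by (simp add: fe F mdef ndef neq vv C2 scal_def add.assoc)
  qed

  have eig1c: "v \<in> eigsp L 1 \<longleftrightarrow> (v a1 = 0 \<and> v a2 = 0 \<and> v a3 = 0 \<and> v b1 + v b2 + v b3 = 0 \<and> v c1 + v c2 + v c3 = 0)" for v
  proof
    assume "v \<in> eigsp L 1"
    then have h0: "mmult L v = scal 1 v" by (simp add: eigsp_def)
    have h: "mmult L v x = v x" for x using fun_cong[OF h0, of x] by (simp add: scal_def)
    have sn: "v c1 + v c2 + v c3 = 0" using h[of b1] by (simp add: F mdef ndef neq)
    have sm: "v b1 + v b2 + v b3 = 0" using h[of c1] by (simp add: F mdef ndef neq)
    have "v a1 = 0" "v a2 = 0" "v a3 = 0"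
      using h[of a1] h[of a2] h[of a3] sn sm by (simp_all add: F mdef ndef neq)
    then show "v a1 = 0 \<and> v a2 = 0 \<and> v a3 = 0 \<and> v b1 + v b2 + v b3 = 0 \<and> v c1 + v c2 + v c3 = 0"
      using sn sm by simp
  next
    assume h: "v a1 = 0 \<and> v a2 = 0 \<and> v a3 = 0 \<and> v b1 + v b2 + v b3 = 0 \<and> v c1 + v c2 + v c3 = 0"
    show "v \<in> eigsp L 1" unfolding eigsp_def using h
      by (simp add: fe F mdef ndef neq scal_def)
  qed
  have dl4b: "distinct [pnt b1 + pnt b2 :: pt \<Rightarrow> 'r, pnt b1 + pnt b3, pnt c1 + pnt c2, pnt c1 + pnt c3]"
  proof -
    have "pnt b1 + pnt b2 \<noteq> pnt b1 + pnt b3" by (rule ne_at[of _ b2]) (simp add: ev neq)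
    moreover have "pnt b1 + pnt b2 \<noteq> pnt c1 + pnt c2" by (rule ne_at[of _ b1]) (simp add: ev neq)
    moreover have "pnt b1 + pnt b2 \<noteq> pnt c1 + pnt c3" by (rule ne_at[of _ b1]) (simp add: ev neq)
    moreover have "pnt b1 + pnt b3 \<noteq> pnt c1 + pnt c2" by (rule ne_at[of _ b1]) (simp add: ev neq)
    moreover have "pnt b1 + pnt b3 \<noteq> pnt c1 + pnt c3" by (rule ne_at[of _ b1]) (simp add: ev neq)
    moreover have "pnt c1 + pnt c2 \<noteq> pnt c1 + pnt c3" by (rule ne_at[of _ c2]) (simp add: ev neq)
    ultimately show ?thesis by (simp only: distinct.simps list.set insert_iff empty_iff) blast
  qed
  have eig1: "eigsp L 1 = rspan {pnt b1 + pnt b2, pnt b1 + pnt b3, pnt c1 + pnt c2, pnt c1 + pnt c3}"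
    unfolding rspan4[OF dl4b]
  proof (intro set_eqI iffI)
    fix v :: "pt \<Rightarrow> 'r" assume "v \<in> eigsp L 1"
    then have h: "v a1 = 0" "v a2 = 0" "v a3 = 0" "v b1 + v b2 + v b3 = 0" "v c1 + v c2 + v c3 = 0"
      using eig1c by auto
    have hb: "v b1 = v b2 + v b3" using h(4) C2(4)[of "v b1" "v b2 + v b3"] by (simp add: add.assoc)
    have hc: "v c1 = v c2 + v c3" using h(5) C2(4)[of "v c1" "v c2 + v c3"] by (simp add: add.assoc)
    show "v \<in> {v. \<exists>f1 f2 f3 f4. v = scal f1 (pnt b1 + pnt b2) + scal f2 (pnt b1 + pnt b3) + scal f3 (pnt c1 + pnt c2) + scal f4 (pnt c1 + pnt c3)}"
      apply (rule CollectI)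
      apply (rule exI[of _ "v b2"])
      apply (rule exI[of _ "v b3"])
      apply (rule exI[of _ "v c2"])
      apply (rule exI[of _ "v c3"])
      using h(1-3) hb hc by (simp add: fe ev neq)
  next
    fix v :: "pt \<Rightarrow> 'r" assume "v \<in> {v. \<exists>f1 f2 f3 f4. v = scal f1 (pnt b1 + pnt b2) + scal f2 (pnt b1 + pnt b3) + scal f3 (pnt c1 + pnt c2) + scal f4 (pnt c1 + pnt c3)}"
    then obtain f1 f2 f3 f4 where v: "v = scal f1 (pnt b1 + pnt b2) + scal f2 (pnt b1 + pnt b3) + scal f3 (pnt c1 + pnt c2) + scal f4 (pnt c1 + pnt c3)" by blast
    have vv: "v a1 = 0" "v a2 = 0" "v a3 = 0" "v b1 = f1 + f2" "v b2 = f1" "v b3 = f2"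
       "v c1 = f3 + f4" "v c2 = f3" "v c3 = f4" by (simp_all add: v ev neq)
    show "v \<in> eigsp L 1" unfolding eig1c
      by (simp add: vv C2 add_ac)
  qed
  define T where "T = (\<lambda>w. mmult L w - scal (0::'r) w)"
  have Tx: "T w x = mmult L w x" for w x by (simp add: T_def scal_def)
  have g0def: "geigsp L 0 = {v. \<exists>k. (T ^^ k) v = 0}" by (simp add: geigsp_def T_def)
  define P where "P = (\<lambda>v::pt \<Rightarrow> 'r. v b2 = v b1 \<and> v b3 = v b1 \<and> v c2 = v c1 \<and> v c3 = v c1)"
  have TP: "P (T w) = P w" for w by (simp add: P_def Tx F mdef ndef neq)
  have TPk: "P ((T ^^ k) w) = P w" for k w by (induction k) (simp_all add: TP)
  have dl5: "distinct [pnt a1 :: pt \<Rightarrow> 'r, pnt a2, pnt a3, ind m, ind n]" by (simp add: fe ev neq mdef ndef)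
  have geig0: "geigsp L 0 = rspan {pnt a1, pnt a2, pnt a3, ind m, ind n}"
    unfolding rspan5[OF dl5] g0def
  proof (intro set_eqI iffI)
    fix v :: "pt \<Rightarrow> 'r" assume "v \<in> {v. \<exists>k. (T ^^ k) v = 0}"
    then obtain k where "(T ^^ k) v = 0" by blast
    then have "P v" using TPk[of k v] by (simp add: P_def)
    then have h: "v b2 = v b1" "v b3 = v b1" "v c2 = v c1" "v c3 = v c1" by (simp_all add: P_def)
    show "v \<in> {v. \<exists>f1 f2 f3 f4 f5. v = scal f1 (pnt a1) + scal f2 (pnt a2) + scal f3 (pnt a3) + scal f4 (ind m) + scal f5 (ind n)}"
      apply (rule CollectI)
      apply (rule exI[of _ "v a1"])
      apply (rule exI[of _ "v a2"])
      apply (rule exI[of _ "v a3"])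
      apply (rule exI[of _ "v b1"])
      apply (rule exI[of _ "v c1"])
      using h by (simp add: fe ev neq mdef ndef)
  next
    fix v :: "pt \<Rightarrow> 'r" assume "v \<in> {v. \<exists>f1 f2 f3 f4 f5. v = scal f1 (pnt a1) + scal f2 (pnt a2) + scal f3 (pnt a3) + scal f4 (ind m) + scal f5 (ind n)}"
    then obtain f1 f2 f3 f4 f5 where v: "v = scal f1 (pnt a1) + scal f2 (pnt a2) + scal f3 (pnt a3) + scal f4 (ind m) + scal f5 (ind n)" by blast
    have vv: "v a1 = f1" "v a2 = f2" "v a3 = f3" "v b1 = f4" "v b2 = f4" "v b3 = f4"
       "v c1 = f5" "v c2 = f5" "v c3 = f5" by (simp_all add: v ev neq mdef ndef)
    have T1: "T v = (\<lambda>_. f4 + f5)" by (simp add: fe Tx F mdef ndef neq vv C2 add_ac)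
    have T2: "T (\<lambda>_. f4 + f5) = 0" by (simp add: fe Tx F mdef ndef neq C2 add_ac)
    have "(T ^^ 2) v = 0" by (simp add: numeral_2_eq_2 T1 T2)
    then show "v \<in> {v. \<exists>k. (T ^^ k) v = 0}" by blast
  qed

  define U where "U = (\<lambda>w. mmult L w - scal (1::'r) w)"
  have Ux: "U w x = mmult L w x - w x" for w x by (simp add: U_def scal_def)
  have g1def: "geigsp L 1 = {v. \<exists>k. (U ^^ k) v = 0}" by (simp add: geigsp_def U_def)
  define E where "E = (\<lambda>v::pt \<Rightarrow> 'r. v a1 = 0 \<and> v a2 = 0 \<and> v a3 = 0 \<and> v b1 + v b2 + v b3 = 0 \<and> v c1 + v c2 + v c3 = 0)"
  have eig1E: "eigsp L 1 = {v. E v}" using eig1c by (auto simp: E_def)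
  have UE: "E w" if "E (U w)" for w
  proof -
    obtain Sm where Sm: "Sm = w b1 + w b2 + w b3" by simp
    obtain Sn where Sn: "Sn = w c1 + w c2 + w c3" by simp
    have u: "U w a1 = Sm + Sn - w a1" "U w a2 = Sm + Sn - w a2" "U w a3 = Sm + Sn - w a3"
      "U w b1 = Sn" "U w b2 = Sn" "U w b3 = Sn" "U w c1 = Sm" "U w c2 = Sm" "U w c3 = Sm"
      by (simp_all add: Ux F mdef ndef neq Sm Sn)
    have "Sn + Sn + Sn = 0" "Sm + Sm + Sm = 0" using that by (simp_all add: E_def u)
    then have z: "Sn = 0" "Sm = 0" by (metis C2(5))+
    then have "w a1 = 0" "w a2 = 0" "w a3 = 0" using that by (simp_all add: E_def u)
    then show ?thesis using z Sm Sn by (simp add: E_def)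
  qed
  have UEk: "E ((U ^^ k) w) \<Longrightarrow> E w" for k w
  proof (induction k arbitrary: w)
    case (Suc k)
    have "(U ^^ Suc k) w = (U ^^ k) (U w)" by (simp add: funpow_Suc_right del: funpow.simps)
    then show ?case using Suc UE by metis
  qed simp
  have geig1: "geigsp L 1 = eigsp L 1"
  proof (intro set_eqI iffI)
    fix v :: "pt \<Rightarrow> 'r" assume "v \<in> geigsp L 1"
    then obtain k where "(U ^^ k) v = 0" using g1def by blast
    moreover have "E 0" by (simp add: E_def)
    ultimately have "E v" using UEk by metis
    then show "v \<in> eigsp L 1" using eig1E by simp
  next
    fix v :: "pt \<Rightarrow> 'r" assume "v \<in> eigsp L 1"
    then have "U v = 0" by (simp add: U_def eigsp_def)
    then have "(U ^^ 1) v = 0" by simp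
    then show "v \<in> geigsp L 1" using g1def by blast
  qed
  have decomp: "\<exists>x y. x \<in> geigsp L 0 \<and> y \<in> eigsp L 1 \<and> v = x + y" for v :: "pt \<Rightarrow> 'r"
  proof -
    obtain Sm where Sm: "Sm = v b1 + v b2 + v b3" by simp
    obtain Sn where Sn: "Sn = v c1 + v c2 + v c3" by simp
    define x where "x = scal (v a1) (pnt a1) + scal (v a2) (pnt a2) + scal (v a3) (pnt a3) + scal Sm (ind m) + scal Sn (ind n)"
    have xin: "x \<in> geigsp L 0" unfolding geig0 rspan5[OF dl5] x_def by blast
    have xv: "x a1 = v a1" "x a2 = v a2" "x a3 = v a3" "x b1 = Sm" "x b2 = Sm" "x b3 = Sm"
      "x c1 = Sn" "x c2 = Sn" "x c3 = Sn" by (simp_all add: x_def ev neq mdef ndef)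
    have "v b1 - Sm + (v b2 - Sm) + (v b3 - Sm) = (v b1 + v b2 + v b3) - (Sm + Sm + Sm)"
      by (simp add: algebra_simps)
    then have e1: "v b1 - Sm + (v b2 - Sm) + (v b3 - Sm) = 0" using C2(5) Sm by simp
    have "v c1 - Sn + (v c2 - Sn) + (v c3 - Sn) = (v c1 + v c2 + v c3) - (Sn + Sn + Sn)"
      by (simp add: algebra_simps)
    then have e2: "v c1 - Sn + (v c2 - Sn) + (v c3 - Sn) = 0" using C2(5) Sn by simp
    have "E (v - x)" unfolding E_def using e1 e2 by (simp add: xv)
    then have "v - x \<in> eigsp L 1" using eig1E by simp
    then show ?thesis using xin by (metis add.commute diff_add_cancel)
  qed
  have inter: "geigsp L 0 \<inter> eigsp L 1 = {0}"
  proof (intro set_eqI iffI)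
    fix v :: "pt \<Rightarrow> 'r" assume "v \<in> geigsp L 0 \<inter> eigsp L 1"
    then have "v \<in> rspan {pnt a1, pnt a2, pnt a3, ind m, ind n}" "E v" using geig0 eig1E by auto
    then obtain f1 f2 f3 f4 f5 where v: "v = scal f1 (pnt a1) + scal f2 (pnt a2) + scal f3 (pnt a3) + scal f4 (ind m) + scal f5 (ind n)"
      and Ev: "E v"
      unfolding rspan5[OF dl5] by blast
    have vv: "v a1 = f1" "v a2 = f2" "v a3 = f3" "v b1 = f4" "v b2 = f4" "v b3 = f4"
       "v c1 = f5" "v c2 = f5" "v c3 = f5" by (simp_all add: v ev neq mdef ndef)
    have "f1 = 0" "f2 = 0" "f3 = 0" "f4 + f4 + f4 = 0" "f5 + f5 + f5 = 0" using Ev by (simp_all add: E_def vv)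
    then have "f1 = 0" "f2 = 0" "f3 = 0" "f4 = 0" "f5 = 0" by (metis C2(5))+
    then show "v \<in> {0}" by (simp add: fe vv)
  next
    fix v :: "pt \<Rightarrow> 'r" assume "v \<in> {0}"
    then have v0: "v = 0" by simp
    have "(T ^^ 0) v = 0" using v0 by simp
    then have "v \<in> geigsp L 0" using g0def by blast
    moreover have "v \<in> eigsp L 1" using eig1E v0 by (simp add: E_def)
    ultimately show "v \<in> geigsp L 0 \<inter> eigsp L 1" by blast
  qed
  have ev0: "is_eigenvalue L 0"
    unfolding is_eigenvalue_def
  proof (intro exI conjI)
    show "(pnt a1 :: pt \<Rightarrow> 'r) \<noteq> 0" by (rule ne_at[of _ a1]) (simp add: ev)
    show "mmult L (pnt a1) = scal 0 (pnt a1)" by (simp add: fe F ev neq mdef ndef)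
  qed
  have ev1: "is_eigenvalue L 1"
    unfolding is_eigenvalue_def
  proof (intro exI conjI)
    show "(pnt b1 + pnt b2 :: pt \<Rightarrow> 'r) \<noteq> 0" by (rule ne_at[of _ b1]) (simp add: ev neq)
    have "(pnt b1 + pnt b2 :: pt \<Rightarrow> 'r) \<in> eigsp L 1" unfolding eig1E E_def
      by (simp add: ev neq C2)
    then show "mmult L (pnt b1 + pnt b2) = scal 1 (pnt b1 + pnt b2)" by (simp add: eigsp_def)
  qed
  show ?thesis using ev0 ev1 eig0 eig1 geig0 geig1 decomp inter by blast
qed

end
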